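(* Let $K$ be a finite simplicial complex, let $f\colon K\to\mathbb{R}$ be an injective filtration function, and let $\sigma_1,\sigma_2$ be two $n$-dimensional simplices of $K$. Assume that for some $\varepsilon>0$ we have $$f(\sigma_1)<f(\sigma_2)<f(\sigma_1)+2\varepsilon.$$ Then there exists an injective filtration function $g$ on $K$ such that $\|f-g\|_\infty\le\varepsilon$ and $g(\sigma_2)<g(\sigma_1)$.
   Context: A filtration function on a finite simplicial complex $K$ is a map $f\colon K\to\mathbb{R}$ such that $f(\sigma)\le f(\tau)$ whenever $\sigma$ is a face of $\tau$. For two functions $f,g\colon K\to\mathbb{R}$, $\|f-g\|_\infty=\max_{\sigma\in K}|f(\sigma)-g(\sigma)|$. *)

theory Defs
  imports Complex_Main
begin

definition finite_simplicial_complex :: "'a set set \<Rightarrow> bool" where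
  "finite_simplicial_complex K \<longleftrightarrow>
     finite K \<and> (\<forall>\<sigma>\<in>K. finite \<sigma> \<and> \<sigma> \<noteq> {}) \<and>
     (\<forall>\<sigma>\<in>K. \<forall>\<tau>. \<tau> \<subseteq> \<sigma> \<and> \<tau> \<noteq> {} \<longrightarrow> \<tau> \<in> K)"

definition simplex_dim :: "'a set \<Rightarrow> nat" where
  "simplex_dim \<sigma> = card \<sigma> - 1"

definition filtration :: "'a set set \<Rightarrow> ('a set \<Rightarrow> real) \<Rightarrow> bool" where
  "filtration K f \<longleftrightarrow> (\<forall>\<sigma>\<in>K. \<forall>\<tau>\<in>K. \<sigma> \<subseteq> \<tau> \<longrightarrow> f \<sigma> \<le> f \<tau>)"

definition sup_dist :: "'a set set \<Rightarrow> ('a set \<Rightarrow> real) \<Rightarrow> ('a set \<Rightarrow> real) \<Rightarrow> real" where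
  "sup_dist K f g = Max ((\<lambda>\<sigma>. \<bar>f \<sigma> - g \<sigma>\<bar>) ` K)"

end

theory Submission
  imports Defs
begin

theorem proposition2p1:
  fixes K :: "'a set set" and f :: "'a set \<Rightarrow> real"
    and \<sigma>1 \<sigma>2 :: "'a set" and n :: nat and \<epsilon> :: real
  assumes "finite_simplicial_complex K"
    and "filtration K f" and "inj_on f K"
    and "\<sigma>1 \<in> K" and "\<sigma>2 \<in> K"
    and "simplex_dim \<sigma>1 = n" and "simplex_dim \<sigma>2 = n"
    and "\<epsilon> > 0"
    and "f \<sigma>1 < f \<sigma>2" and "f \<sigma>2 < f \<sigma>1 + 2 * \<epsilon>"
  shows "\<exists>g :: 'a set \<Rightarrow> real. filtration K g \<and> inj_on g K \<and>
           sup_dist K f g \<le> \<epsilon> \<and> g \<sigma>2 < g \<sigma>1"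
proof -
  note A = assms
  define a where "a = f \<sigma>1"
  define b where "b = f \<sigma>2"
  define h where "h = (b - a) / 2"
  define m where "m = (a + b) / 2"
  define e where "e = min h (\<epsilon> - h) / 2"
  define s where "s = e / (b - a)"
  have ab: "a < b" using A(9) by (simp add: a_def b_def)
  have hpos: "0 < h" "h < \<epsilon>" using ab A(10) by (auto simp: h_def a_def b_def)
  have epos: "0 < e" "e \<le> h / 2" "e \<le> (\<epsilon> - h) / 2" using hpos by (auto simp: e_def)
  have spos: "0 < s" using epos ab by (simp add: s_def)
  have sba: "s * (b - a) = e" using ab by (simp add: s_def)
  have sx: "0 \<le> s * (x - a) \<and> s * (x - a) \<le> e" if "a \<le> x" "x \<le> b" for x
  proof -
    have "s * (x - a) \<le> s * (b - a)" using that spos by (intro mult_left_mono) auto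
    then show ?thesis using that spos sba by auto
  qed
  have mh: "m - h = a" "m + h = b" by (auto simp: m_def h_def field_simps)
  define g where "g = (\<lambda>\<tau>. if a \<le> f \<tau> \<and> f \<tau> \<le> b
      then (if \<sigma>1 \<subseteq> \<tau> then m + e else m - e) + s * (f \<tau> - a) else f \<tau>)"
  have inb: "a \<le> g \<tau> \<and> g \<tau> \<le> b \<and> m - e \<le> g \<tau> \<and> g \<tau> \<le> m + 2 * e \<and> \<bar>f \<tau> - g \<tau>\<bar> \<le> \<epsilon>"
    if "a \<le> f \<tau>" "f \<tau> \<le> b" for \<tau>
    using sx[OF that] that epos mh hpos unfolding g_def by (auto simp: abs_if)
  have ddist: "\<bar>f \<tau> - g \<tau>\<bar> \<le> \<epsilon>" for \<tau>
    using inb[of \<tau>] A(8) by (cases "a \<le> f \<tau> \<and> f \<tau> \<le> b") (auto simp: g_def)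
  have U: "g \<tau> = m + e + s * (f \<tau> - a)" if "a \<le> f \<tau>" "f \<tau> \<le> b" "\<sigma>1 \<subseteq> \<tau>" for \<tau>
    using that by (simp add: g_def)
  have D: "g \<tau> = m - e + s * (f \<tau> - a)" if "a \<le> f \<tau>" "f \<tau> \<le> b" "\<not> \<sigma>1 \<subseteq> \<tau>" for \<tau>
    using that by (simp add: g_def)
  have O: "g \<tau> = f \<tau>" if "\<not> (a \<le> f \<tau> \<and> f \<tau> \<le> b)" for \<tau>
    unfolding g_def using that by (rule if_not_P)
  have filt: "filtration K g"
    unfolding filtration_def
  proof (intro ballI impI)
    fix x y assume xy: "x \<in> K" "y \<in> K" "x \<subseteq> y"
    have fxy: "f x \<le> f y" using A(2) xy unfolding filtration_def by blast
    show "g x \<le> g y"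
    proof (cases "a \<le> f x \<and> f x \<le> b")
      case xin: True
      show ?thesis
      proof (cases "a \<le> f y \<and> f y \<le> b")
        case yin: True
        have m1: "s * (f x - a) \<le> s * (f y - a)" using fxy spos by (intro mult_left_mono) auto
        show ?thesis
        proof (cases "\<sigma>1 \<subseteq> x")
          case True
          then have "\<sigma>1 \<subseteq> y" using xy by blast
          then show ?thesis using U[of x] U[of y] xin yin True m1 by auto
        next
          case False
          show ?thesis
          proof (cases "\<sigma>1 \<subseteq> y")
            case True
            then show ?thesis using U[of y] D[of x] xin yin False m1 epos by auto
          next
            case F2: False
            then show ?thesis using D[of y] D[of x] xin yin False m1 by auto
          qed
        qed
      next
        case False
        then show ?thesis using O[of y] inb[of x] xin fxy by auto
      qed
    next
      case xout: False
      show ?thesis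
      proof (cases "a \<le> f y \<and> f y \<le> b")
        case True
        then show ?thesis using O[of x] inb[of y] xout fxy by auto
      next
        case False
        then show ?thesis using O[of x] O[of y] xout fxy by auto
      qed
    qed
  qed
  have inj: "inj_on g K"
  proof (rule inj_onI)
    fix x y assume xy: "x \<in> K" "y \<in> K" "g x = g y"
    have "f x = f y"
    proof (cases "a \<le> f x \<and> f x \<le> b")
      case xin: True
      show ?thesis
      proof (cases "a \<le> f y \<and> f y \<le> b")
        case yin: True
        have sxx: "0 \<le> s * (f x - a) \<and> s * (f x - a) \<le> e" using sx xin by auto
        have syy: "0 \<le> s * (f y - a) \<and> s * (f y - a) \<le> e" using sx yin by auto
        have "s * (f x - a) = s * (f y - a)"
        proof (cases "\<sigma>1 \<subseteq> x"; cases "\<sigma>1 \<subseteq> y")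
          assume "\<sigma>1 \<subseteq> x" "\<sigma>1 \<subseteq> y" then show ?thesis using U[of x] U[of y] xin yin xy by auto
        next
          assume "\<sigma>1 \<subseteq> x" "\<not> \<sigma>1 \<subseteq> y" then show ?thesis using U[of x] D[of y] xin yin xy sxx syy epos by auto
        next
          assume "\<not> \<sigma>1 \<subseteq> x" "\<sigma>1 \<subseteq> y" then show ?thesis using D[of x] U[of y] xin yin xy sxx syy epos by auto
        next
          assume "\<not> \<sigma>1 \<subseteq> x" "\<not> \<sigma>1 \<subseteq> y" then show ?thesis using D[of x] D[of y] xin yin xy by auto
        qed
        then show ?thesis using spos by simp
      next
        case False
        then show ?thesis using O[of y] inb[of x] xin xy by auto
      qed
    next
      case xout: False
      show ?thesis
      proof (cases "a \<le> f y \<and> f y \<le> b")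
        case True
        then show ?thesis using O[of x] inb[of y] xout xy by auto
      next
        case False
        then show ?thesis using O[of x] O[of y] xout xy by auto
      qed
    qed
    then show "x = y" using A(3) xy inj_onD by metis
  qed
  have fin: "finite K" using A(1) by (simp add: finite_simplicial_complex_def)
  have sd: "sup_dist K f g \<le> \<epsilon>"
    unfolding sup_dist_def using fin A(4) ddist by (subst Max_le_iff) auto
  have ne: "\<sigma>1 \<noteq> \<sigma>2" using A(9) by auto
  have fs: "finite \<sigma>2" using A(1) A(5) by (simp add: finite_simplicial_complex_def)
  have ne1: "\<sigma>1 \<noteq> {}" "\<sigma>2 \<noteq> {}" using A(1) A(4) A(5) unfolding finite_simplicial_complex_def by blast+
  have fs1: "finite \<sigma>1" using A(1) A(4) by (simp add: finite_simplicial_complex_def)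
  have c0: "card \<sigma>1 > 0" "card \<sigma>2 > 0" using fs fs1 ne1 by (simp_all add: card_gt_0_iff)
  have cards: "card \<sigma>1 = card \<sigma>2"
    using A(6) A(7) c0 unfolding simplex_dim_def by linarith
  have nsub: "\<not> \<sigma>1 \<subseteq> \<sigma>2"
    using card_subset_eq[OF fs] cards ne by metis
  have g1: "g \<sigma>1 = m + e" using U[of \<sigma>1] ab by (simp add: a_def)
  have g2: "g \<sigma>2 = m - e + s * (b - a)" using D[of \<sigma>2] ab nsub by (simp add: b_def)
  have "g \<sigma>2 < g \<sigma>1" using g1 g2 sba epos by simp
  then show ?thesis using filt inj sd by blast
qed

end
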